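(* Let $a>0$, $a\neq1$. Then the space of Killing vector fields on $M^{3}_{a}$ is the two-dimensional space spanned by $\partial_{\xi}$ and $\partial_{\mu}$.
   Context: $M^{3}_{a}:=\{(x,y,z,w)\in\mathbb{R}^{4}:x^{2}+y^{2}=a^{2}(1-z^{2}-w^{2})\}$ with the metric induced from $\mathbb{R}^{4}$; $\partial_{\xi}:=-y\partial_{x}+x\partial_{y}$ and $\partial_{\mu}:=-w\partial_{z}+z\partial_{w}$, restricted to $M^{3}_{a}$. A vector field $X$ is Killing if $g(\nabla_{V}X,W)=-g(\nabla_{W}X,V)$ for all vector fields $V,W$ ($\nabla$ the Levi-Civita connection). *)

theory Defs
  imports "HOL-Analysis.Analysis"
begin

definition Ma :: "real \<Rightarrow> (real^4) set" where
  "Ma a = {p. (p$1)^2 + (p$2)^2 = a^2 * (1 - (p$3)^2 - (p$4)^2)}"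

text \<open>Defining function F(p) = x^2+y^2+a^2 z^2+a^2 w^2 - a^2, with M_a = F^{-1}(0);
  tangent space at p = kernel of dF_p.\<close>
definition Fa :: "real \<Rightarrow> real^4 \<Rightarrow> real" where
  "Fa a p = (p$1)^2 + (p$2)^2 + a^2 * (p$3)^2 + a^2 * (p$4)^2 - a^2"

definition tangent_space :: "real \<Rightarrow> real^4 \<Rightarrow> (real^4) set" where
  "tangent_space a p = {v. frechet_derivative (Fa a) (at p) v = 0}"

text \<open>Unit-free normal direction (gradient of F up to factor 2) and tangential projection.\<close>
definition normal_a :: "real \<Rightarrow> real^4 \<Rightarrow> real^4" where
  "normal_a a p = vector [p$1, p$2, a^2 * p$3, a^2 * p$4]"

definition tang_proj :: "real \<Rightarrow> real^4 \<Rightarrow> real^4 \<Rightarrow> real^4" where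
  "tang_proj a p u = u - ((u \<bullet> normal_a a p) / (normal_a a p \<bullet> normal_a a p)) *\<^sub>R normal_a a p"

fun Ck_on :: "nat \<Rightarrow> (real^4) set \<Rightarrow> (real^4 \<Rightarrow> real^4) \<Rightarrow> bool" where
  "Ck_on 0 S f = continuous_on S f"
| "Ck_on (Suc k) S f = (\<exists>f'. (\<forall>x\<in>S. (f has_derivative f' x) (at x)) \<and>
                                (\<forall>v. Ck_on k S (\<lambda>x. f' x v)))"

definition smooth_on :: "(real^4) set \<Rightarrow> (real^4 \<Rightarrow> real^4) \<Rightarrow> bool" where
  "smooth_on S f = (\<forall>k. Ck_on k S f)"

text \<open>A (smooth) vector field on M_a: given by a smooth map on an open neighbourhood of
  M_a in R^4 which is tangent to M_a at every point of M_a (only its values on M_a matter).\<close>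
definition vector_field :: "real \<Rightarrow> (real^4 \<Rightarrow> real^4) \<Rightarrow> bool" where
  "vector_field a X = ((\<exists>U. open U \<and> Ma a \<subseteq> U \<and> smooth_on U X) \<and>
                        (\<forall>p\<in>Ma a. X p \<in> tangent_space a p))"

text \<open>Levi-Civita connection of the induced metric (Gauss formula): tangential part of the
  ambient directional derivative.\<close>
definition LC_nabla :: "real \<Rightarrow> (real^4 \<Rightarrow> real^4) \<Rightarrow> (real^4 \<Rightarrow> real^4) \<Rightarrow> real^4 \<Rightarrow> real^4" where
  "LC_nabla a V X p = tang_proj a p (frechet_derivative X (at p) (V p))"

definition Killing :: "real \<Rightarrow> (real^4 \<Rightarrow> real^4) \<Rightarrow> bool" where
  "Killing a X = (vector_field a X \<and>
     (\<forall>V W. vector_field a V \<longrightarrow> vector_field a W \<longrightarrow>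
        (\<forall>p\<in>Ma a. LC_nabla a V X p \<bullet> W p = - (LC_nabla a W X p \<bullet> V p))))"

definition d_xi :: "real^4 \<Rightarrow> real^4" where
  "d_xi p = vector [- p$2, p$1, 0, 0]"

definition d_mu :: "real^4 \<Rightarrow> real^4" where
  "d_mu p = vector [0, 0, - p$4, p$3]"

end

theory Submission
  imports Defs
begin


lemma vector_4 [simp]:
 "(vector [x,y,z,w] ::('a::zero)^4)$1 = x"
 "(vector [x,y,z,w] ::('a::zero)^4)$2 = y"
 "(vector [x,y,z,w] ::('a::zero)^4)$3 = z"
 "(vector [x,y,z,w] ::('a::zero)^4)$4 = w"
  unfolding vector_def by simp_all

lemma inner4: "(x::real^4) \<bullet> y = x$1*y$1 + x$2*y$2 + x$3*y$3 + x$4*y$4"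
  by (simp add: inner_vec_def sum_4)

lemma vec4_eq: "(x::real^4) = y \<longleftrightarrow> x$1=y$1 \<and> x$2=y$2 \<and> x$3=y$3 \<and> x$4=y$4"
  by (simp add: vec_eq_iff forall_4)

lemma nth_deriv [derivative_intros]:
  "(f has_derivative f') F \<Longrightarrow> ((\<lambda>x. f x $ i) has_derivative (\<lambda>h. f' h $ i)) F"
  by (rule bounded_linear.has_derivative[OF bounded_linear_vec_nth])

lemma Fa_deriv: "(Fa a has_derivative (\<lambda>v. 2 * (normal_a a p \<bullet> v))) (at p)"
  unfolding Fa_def[abs_def] normal_a_def
  apply (rule derivative_eq_intros refl | simp)+
  apply (simp add: inner4 algebra_simps)
  done

lemma tangent_iff: "v \<in> tangent_space a p \<longleftrightarrow> normal_a a p \<bullet> v = 0"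
  unfolding tangent_space_def using frechet_derivative_at[OF Fa_deriv[of a p]]
  by (metis (mono_tags, lifting) mem_Collect_eq mult_eq_0_iff zero_neq_numeral)

lemma tang_proj_inner: "tang_proj a p u \<bullet> w = u \<bullet> w" if "normal_a a p \<bullet> w = 0"
proof -
  have "tang_proj a p u \<bullet> w = u \<bullet> w - (u \<bullet> normal_a a p / (normal_a a p \<bullet> normal_a a p)) * (normal_a a p \<bullet> w)"
    unfolding tang_proj_def by (simp add: inner_diff_left)
  then show ?thesis using that by simp
qed

lemma Ck_affine: "linear L \<Longrightarrow> Ck_on k S (\<lambda>x. L x + c)"
proof (induction k arbitrary: L c)
  case 0
  then show ?case
    using linear_conv_bounded_linear[of L] linear_continuous_on[of L S]
    by (auto intro!: continuous_on_add continuous_on_const)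
next
  case (Suc k)
  have "((\<lambda>x. L x + c) has_derivative L) (at x)" for x
    using Suc.prems by (auto intro!: derivative_eq_intros linear_imp_has_derivative)
  moreover have "Ck_on k S (\<lambda>x. (\<lambda>_. 0) x + L v)" for v
    by (rule Suc.IH) (simp add: linear_zero)
  ultimately show ?case by (auto intro!: exI[of _ "\<lambda>x. L"])
qed

lemma smooth_linear: "linear L \<Longrightarrow> smooth_on S L"
  unfolding smooth_on_def using Ck_affine[of L _ S 0] by simp

lemma vf_linear: "linear L \<Longrightarrow> (\<And>q. q \<in> Ma a \<Longrightarrow> normal_a a q \<bullet> L q = 0) \<Longrightarrow> vector_field a L"
  unfolding vector_field_def tangent_iff
  by (auto intro!: exI[of _ UNIV] smooth_linear)

lemma Ma_nonzero: "a \<noteq> 0 \<Longrightarrow> p \<in> Ma a \<Longrightarrow> p \<noteq> 0"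
  unfolding Ma_def by auto

definition Dinv :: "real \<Rightarrow> real^4 \<Rightarrow> real^4" where
  "Dinv a p = vector [p$1, p$2, p$3 / a^2, p$4 / a^2]"

lemma test_field:
  assumes a: "a \<noteq> 0" and p: "p \<in> Ma a" and v: "normal_a a p \<bullet> v = 0"
  shows "\<exists>V. vector_field a V \<and> V p = v"
proof -
  define V where "V q = (1 / (p \<bullet> p)) *\<^sub>R ((p \<bullet> q) *\<^sub>R v - (normal_a a v \<bullet> q) *\<^sub>R Dinv a p)" for q
  have lin: "linear V"
    unfolding V_def by (intro linearI) (simp_all add: inner_add_right algebra_simps)
  have tan: "normal_a a q \<bullet> V q = 0" for q
  proof -
    have "normal_a a q \<bullet> ((p \<bullet> q) *\<^sub>R v - (normal_a a v \<bullet> q) *\<^sub>R Dinv a p) = 0"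
      unfolding normal_a_def Dinv_def using a
      by (simp add: inner4 algebra_simps)
    then show ?thesis unfolding V_def by simp
  qed
  have pp: "p \<bullet> p \<noteq> 0" using Ma_nonzero[OF a p] by simp
  have "normal_a a v \<bullet> p = 0" using v unfolding normal_a_def by (simp add: inner4 algebra_simps)
  then have "V p = v" unfolding V_def using pp by simp
  then show ?thesis using vf_linear[OF lin tan] by blast
qed

lemma vf_deriv: "vector_field a X \<Longrightarrow> p \<in> Ma a \<Longrightarrow> (X has_derivative frechet_derivative X (at p)) (at p)"
  unfolding vector_field_def smooth_on_def
  apply clarify
  apply (drule spec[of _ 1])
  apply (auto simp: One_nat_def)
  by (metis at_within_open frechet_derivative_at subsetD)

lemma vf_tan: "vector_field a X \<Longrightarrow> p \<in> Ma a \<Longrightarrow> normal_a a p \<bullet> X p = 0"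
  unfolding vector_field_def tangent_iff by blast

lemma Killing_pt:
  assumes a: "a \<noteq> 0" and K: "Killing a X" and p: "p \<in> Ma a"
    and v: "normal_a a p \<bullet> v = 0" and w: "normal_a a p \<bullet> w = 0"
  shows "frechet_derivative X (at p) v \<bullet> w + frechet_derivative X (at p) w \<bullet> v = 0"
proof -
  obtain V where V: "vector_field a V" "V p = v" using test_field[OF a p v] by blast
  obtain W where W: "vector_field a W" "W p = w" using test_field[OF a p w] by blast
  have "LC_nabla a V X p \<bullet> W p = - (LC_nabla a W X p \<bullet> V p)"
    using K V W p unfolding Killing_def by blast
  then show ?thesis unfolding LC_nabla_def using V W v w by (simp add: tang_proj_inner)
qed



definition Qf :: "real \<Rightarrow> real^4 \<Rightarrow> real" where
  "Qf a q = ((q$1)^2 + (q$2)^2) / a^2 + (q$3)^2 + (q$4)^2"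

definition Nm :: "real \<Rightarrow> real^4 \<Rightarrow> real^4" where
  "Nm a q = (1 / sqrt (Qf a q)) *\<^sub>R q"

lemma Qf_pos: "a \<noteq> 0 \<Longrightarrow> q \<noteq> 0 \<Longrightarrow> Qf a q > 0"
proof -
  assume a: "a \<noteq> 0" and q: "q \<noteq> 0"
  then have "q$1 \<noteq> 0 \<or> q$2 \<noteq> 0 \<or> q$3 \<noteq> 0 \<or> q$4 \<noteq> 0" by (auto simp: vec4_eq)
  moreover have "((q$1)^2 + (q$2)^2) / a^2 \<ge> 0" by simp
  moreover have "q$1 \<noteq> 0 \<or> q$2 \<noteq> 0 \<Longrightarrow> ((q$1)^2 + (q$2)^2) / a^2 > 0"
    using a by (auto intro!: divide_pos_pos simp: add_pos_nonneg add_nonneg_pos)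
  ultimately show ?thesis unfolding Qf_def
    by (smt (verit, best) power2_less_0 zero_less_power2)
qed

lemma Qf_Ma: "a \<noteq> 0 \<Longrightarrow> p \<in> Ma a \<Longrightarrow> Qf a p = 1"
  unfolding Qf_def Ma_def by (auto simp: field_simps)

lemma Nm_Ma: "a \<noteq> 0 \<Longrightarrow> q \<noteq> 0 \<Longrightarrow> Nm a q \<in> Ma a"
proof -
  assume a: "a \<noteq> 0" and q: "q \<noteq> 0"
  have Q: "Qf a q > 0" using Qf_pos[OF a q] .
  have "((q$1)^2 + (q$2)^2) = a^2 * (Qf a q - (q$3)^2 - (q$4)^2)"
    unfolding Qf_def using a by (simp add: field_simps)
  then show ?thesis unfolding Ma_def Nm_def using Q
    by (simp add: power_mult_distrib power_divide field_simps)
qed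

lemma Nm_id: "a \<noteq> 0 \<Longrightarrow> p \<in> Ma a \<Longrightarrow> Nm a p = p"
  unfolding Nm_def using Qf_Ma by simp

lemma Qf_deriv: "(Qf a has_derivative (\<lambda>v. 2 * ((normal_a a p \<bullet> v) / a^2))) (at p)" if a: "a \<noteq> 0"
  unfolding Qf_def[abs_def]
  using a by (auto intro!: derivative_eq_intros simp: normal_a_def inner4 field_simps)

lemma isqrt_deriv: "((\<lambda>x::real. 1 / sqrt x) has_real_derivative (-1/2)) (at 1)"
  by (rule derivative_eq_intros refl | simp)+

lemma Nm_deriv:
  assumes a: "a \<noteq> 0" and p: "p \<in> Ma a"
  shows "(Nm a has_derivative (\<lambda>v. v - ((normal_a a p \<bullet> v) / a^2) *\<^sub>R p)) (at p)"
proof -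
  have Q: "Qf a p = 1" using Qf_Ma[OF a p] .
  have d1: "((\<lambda>q. 1 / sqrt (Qf a q)) has_derivative (\<lambda>v. (-1/2) * (2 * ((normal_a a p \<bullet> v) / a^2)))) (at p)"
  proof -
    have "((\<lambda>x. 1/sqrt x) has_derivative (*) (-1/2)) (at (Qf a p))"
      unfolding Q using isqrt_deriv unfolding has_field_derivative_def .
    from has_derivative_compose[OF Qf_deriv[OF a, of p] this] show ?thesis by simp
  qed
  have "(Nm a has_derivative (\<lambda>v. (1 / sqrt (Qf a p)) *\<^sub>R v + ((-1/2) * (2 * ((normal_a a p \<bullet> v) / a^2))) *\<^sub>R p)) (at p)"
    unfolding Nm_def[abs_def]
    by (rule has_derivative_scaleR[OF d1 has_derivative_ident])
  then show ?thesis using Q by (simp add: algebra_simps)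
qed


lemma agree_deriv:
  assumes a: "a \<noteq> 0" and X: "vector_field a X" and agr: "\<And>q. q \<in> Ma a \<Longrightarrow> X q = Y q"
    and Y: "linear Y" and p: "p \<in> Ma a" and v: "normal_a a p \<bullet> v = 0"
  shows "frechet_derivative X (at p) v = Y v"
proof -
  let ?DX = "frechet_derivative X (at p)"
  let ?DN = "\<lambda>v. v - ((normal_a a p \<bullet> v) / a^2) *\<^sub>R p"
  have dX: "(X has_derivative ?DX) (at (Nm a p))" using vf_deriv[OF X p] Nm_id[OF a p] by simp
  have dY: "(Y has_derivative Y) (at (Nm a p))" using Y by (rule linear_imp_has_derivative)
  have c1: "((\<lambda>q. X (Nm a q)) has_derivative (\<lambda>h. ?DX (?DN h))) (at p)"
    using has_derivative_compose[OF Nm_deriv[OF a p] dX] .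
  have c2: "((\<lambda>q. Y (Nm a q)) has_derivative (\<lambda>h. Y (?DN h))) (at p)"
    using has_derivative_compose[OF Nm_deriv[OF a p] dY] .
  have c1': "((\<lambda>q. Y (Nm a q)) has_derivative (\<lambda>h. ?DX (?DN h))) (at p)"
  proof (rule has_derivative_transform_within_open[OF c1, of "- {0}"])
    show "open (- {0::real^4})" by auto
    show "p \<in> - {0}" using Ma_nonzero[OF a p] by auto
    fix q :: "real^4" assume "q \<in> - {0}"
    then show "X (Nm a q) = Y (Nm a q)" using agr Nm_Ma[OF a] by auto
  qed
  have "(\<lambda>h. ?DX (?DN h)) = (\<lambda>h. Y (?DN h))" using has_derivative_unique[OF c1' c2] .
  then have "?DX (?DN v) = Y (?DN v)" by metis
  then show ?thesis using v by simp
qed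

definition Yc :: "real \<Rightarrow> real \<Rightarrow> real^4 \<Rightarrow> real^4" where
  "Yc c1 c2 q = c1 *\<^sub>R d_xi q + c2 *\<^sub>R d_mu q"

lemma Yc_linear: "linear (Yc c1 c2)"
  unfolding Yc_def d_xi_def d_mu_def
  by (intro linearI) (simp_all add: vec4_eq algebra_simps)

lemma Yc_skew: "Yc c1 c2 v \<bullet> w = - (Yc c1 c2 w \<bullet> v)"
  unfolding Yc_def d_xi_def d_mu_def by (simp add: inner4 algebra_simps)

lemma Yc_tan: "normal_a a q \<bullet> Yc c1 c2 q = 0"
  unfolding Yc_def d_xi_def d_mu_def normal_a_def by (simp add: inner4 algebra_simps)

lemma Killing_of_agree:
  assumes a: "a \<noteq> 0" and X: "vector_field a X" and agr: "\<And>q. q \<in> Ma a \<Longrightarrow> X q = Yc c1 c2 q"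
  shows "Killing a X"
  unfolding Killing_def
proof (intro conjI allI impI ballI)
  show "vector_field a X" by fact
  fix V W p assume V: "vector_field a V" and W: "vector_field a W" and p: "p \<in> Ma a"
  have tV: "normal_a a p \<bullet> V p = 0" using vf_tan[OF V p] .
  have tW: "normal_a a p \<bullet> W p = 0" using vf_tan[OF W p] .
  show "LC_nabla a V X p \<bullet> W p = - (LC_nabla a W X p \<bullet> V p)"
  proof -
    have e1: "frechet_derivative X (at p) (V p) = Yc c1 c2 (V p)"
      by (rule agree_deriv[OF a X agr Yc_linear p tV])
    have e2: "frechet_derivative X (at p) (W p) = Yc c1 c2 (W p)"
      by (rule agree_deriv[OF a X agr Yc_linear p tW])
    show ?thesis unfolding LC_nabla_def tang_proj_inner[OF tV] tang_proj_inner[OF tW] e1 e2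
      by (rule Yc_skew)
  qed
qed

lemma vf_Yc: "vector_field a (Yc c1 c2)"
  by (rule vf_linear[OF Yc_linear Yc_tan])

lemma d_xi_Yc: "d_xi = Yc 1 0" and d_mu_Yc: "d_mu = Yc 0 1"
  unfolding Yc_def by (auto simp: fun_eq_iff)




lemma vector4_axis: "(vector [x1,x2,x3,x4] :: real^4) = x1 *\<^sub>R axis 1 1 + x2 *\<^sub>R axis 2 1 + x3 *\<^sub>R axis 3 1 + x4 *\<^sub>R axis 4 1"
  by (simp add: vec4_eq axis_def)

lemma vec4_vderiv:
  assumes "(f1 has_real_derivative d1) F" "(f2 has_real_derivative d2) F"
    "(f3 has_real_derivative d3) F" "(f4 has_real_derivative d4) F"
  shows "((\<lambda>t. vector [f1 t, f2 t, f3 t, f4 t] :: real^4) has_vector_derivative vector [d1,d2,d3,d4]) F"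
  unfolding vector4_axis
  by (intro has_vector_derivative_add bounded_linear.has_vector_derivative[OF bounded_linear_scaleR_left]
      assms[unfolded has_real_derivative_iff_has_vector_derivative])

lemma vderiv_eqI: "(f has_vector_derivative d) F \<Longrightarrow> d = d' \<Longrightarrow> (f has_vector_derivative d') F"
  by simp

lemma chain_inner:
  assumes X: "(X has_derivative DX) (at (g t))" and g: "(g has_vector_derivative g') (at t)"
    and e: "(e has_vector_derivative e') (at t)"
  shows "((\<lambda>s. X (g s) \<bullet> e s) has_real_derivative (DX g' \<bullet> e t + X (g t) \<bullet> e')) (at t)"
proof -
  have lin: "linear DX" using X by (rule has_derivative_linear)
  have "((\<lambda>s. X (g s)) has_derivative (\<lambda>h. DX (h *\<^sub>R g'))) (at t)"
    using has_derivative_compose[OF g[unfolded has_vector_derivative_def] X] .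
  then have Xg: "((\<lambda>s. X (g s)) has_vector_derivative DX g') (at t)"
    unfolding has_vector_derivative_def using linear_cmul[OF lin] by simp
  show ?thesis
    using bounded_bilinear.has_vector_derivative[OF bounded_bilinear_inner Xg e] by (simp add: has_real_derivative_iff_has_vector_derivative inner_commute add.commute)
qed


definition Psi :: "real \<Rightarrow> real \<Rightarrow> real \<Rightarrow> real \<Rightarrow> real^4" where
  "Psi a th al be = vector [a * cos th * cos al, a * cos th * sin al, sin th * cos be, sin th * sin be]"
definition Pt :: "real \<Rightarrow> real \<Rightarrow> real \<Rightarrow> real \<Rightarrow> real^4" where
  "Pt a th al be = vector [-a * sin th * cos al, -a * sin th * sin al, cos th * cos be, cos th * sin be]"
definition Pa :: "real \<Rightarrow> real \<Rightarrow> real \<Rightarrow> real^4" where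
  "Pa a th al = vector [-a * cos th * sin al, a * cos th * cos al, 0, 0]"
definition Pb :: "real \<Rightarrow> real \<Rightarrow> real^4" where
  "Pb th be = vector [0, 0, -sin th * sin be, sin th * cos be]"
definition E1 :: "real \<Rightarrow> real^4" where "E1 al = vector [cos al, sin al, 0, 0]"
definition E2 :: "real \<Rightarrow> real^4" where "E2 be = vector [0, 0, cos be, sin be]"
definition E3 :: "real \<Rightarrow> real^4" where "E3 al = vector [-sin al, cos al, 0, 0]"
definition E4 :: "real \<Rightarrow> real^4" where "E4 be = vector [0, 0, -sin be, cos be]"

lemmas Pdefs = Psi_def Pt_def Pa_def Pb_def E1_def E2_def E3_def E4_def

lemma Psi_Ma: "Psi a th al be \<in> Ma a"
  unfolding Ma_def Psi_def apply simp
  using sin_cos_squared_add[of al] sin_cos_squared_add[of be] sin_cos_squared_add[of th]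
  by algebra

lemma tan_Pt: "normal_a a (Psi a th al be) \<bullet> Pt a th al be = 0"
  unfolding normal_a_def Pdefs apply (simp add: inner4)
  using sin_cos_squared_add[of al] sin_cos_squared_add[of be]
  by algebra

lemma tan_Pa: "normal_a a (Psi a th al be) \<bullet> Pa a th al = 0"
  unfolding normal_a_def Pdefs by (simp add: inner4 algebra_simps)

lemma tan_Pb: "normal_a a (Psi a th al be) \<bullet> Pb th be = 0"
  unfolding normal_a_def Pdefs by (simp add: inner4 algebra_simps)

lemma dPsi_t: "((\<lambda>t. Psi a t al be) has_vector_derivative Pt a th al be) (at th)" unfolding Pdefs
  by (rule vderiv_eqI[OF vec4_vderiv], (rule derivative_eq_intros refl)+, simp add: vec4_eq)
lemma dPsi_a: "((\<lambda>t. Psi a th t be) has_vector_derivative Pa a th al) (at al)" unfolding Pdefs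
  by (rule vderiv_eqI[OF vec4_vderiv], (rule derivative_eq_intros refl)+, simp add: vec4_eq)
lemma dPsi_b: "((\<lambda>t. Psi a th al t) has_vector_derivative Pb th be) (at be)" unfolding Pdefs
  by (rule vderiv_eqI[OF vec4_vderiv], (rule derivative_eq_intros refl)+, simp add: vec4_eq)
lemma dPt_t: "((\<lambda>t. Pt a t al be) has_vector_derivative - Psi a th al be) (at th)" unfolding Pdefs
  by (rule vderiv_eqI[OF vec4_vderiv], (rule derivative_eq_intros refl)+, simp add: vec4_eq)
lemma dPt_a: "((\<lambda>t. Pt a th t be) has_vector_derivative (-(a * sin th)) *\<^sub>R E3 al) (at al)" unfolding Pdefs
  by (rule vderiv_eqI[OF vec4_vderiv], (rule derivative_eq_intros refl)+, simp add: vec4_eq)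
lemma dPt_b: "((\<lambda>t. Pt a th al t) has_vector_derivative cos th *\<^sub>R E4 be) (at be)" unfolding Pdefs
  by (rule vderiv_eqI[OF vec4_vderiv], (rule derivative_eq_intros refl)+, simp add: vec4_eq)
lemma dPa_t: "((\<lambda>t. Pa a t al) has_vector_derivative (-(a * sin th)) *\<^sub>R E3 al) (at th)" unfolding Pdefs
  by (rule vderiv_eqI[OF vec4_vderiv], (rule derivative_eq_intros refl)+, simp add: vec4_eq)
lemma dPa_a: "((\<lambda>t. Pa a th t) has_vector_derivative (-(a * cos th)) *\<^sub>R E1 al) (at al)" unfolding Pdefs
  by (rule vderiv_eqI[OF vec4_vderiv], (rule derivative_eq_intros refl)+, simp add: vec4_eq)
lemma dPb_t: "((\<lambda>t. Pb t be) has_vector_derivative cos th *\<^sub>R E4 be) (at th)" unfolding Pdefs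
  by (rule vderiv_eqI[OF vec4_vderiv], (rule derivative_eq_intros refl)+, simp add: vec4_eq)
lemma dPb_b: "((\<lambda>t. Pb th t) has_vector_derivative (- sin th) *\<^sub>R E2 be) (at be)" unfolding Pdefs
  by (rule vderiv_eqI[OF vec4_vderiv], (rule derivative_eq_intros refl)+, simp add: vec4_eq)




lemma circ: fixes x y R :: real assumes "R \<ge> 0" "x^2 + y^2 = R^2" shows "\<exists>t. x = R * cos t \<and> y = R * sin t"
proof (cases "R = 0")
  case True
  then have "x = 0 \<and> y = 0" using assms
    using sum_power2_eq_zero_iff[of x y] by simp
  then show ?thesis using True by simp
next
  case False
  then have "(x/R)^2 + (y/R)^2 = 1" using assms by (simp add: power_divide field_simps)
  then obtain t where "x/R = cos t" "y/R = sin t" using sincos_total_2pi_le by blast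
  then show ?thesis using False by (auto simp: field_simps)
qed

lemma Psi_surj:
  assumes a: "a > 0" and p: "p \<in> Ma a"
  shows "\<exists>th al be. 0 \<le> th \<and> th \<le> pi/2 \<and> p = Psi a th al be"
proof -
  define s0 where "s0 = sqrt ((p$3)^2 + (p$4)^2)"
  have pM: "(p$1)^2 + (p$2)^2 = a^2 * (1 - (p$3)^2 - (p$4)^2)" using p unfolding Ma_def by simp
  have s0sq: "s0^2 = (p$3)^2 + (p$4)^2" unfolding s0_def by simp
  have s0nn: "s0 \<ge> 0" unfolding s0_def by simp
  have "(p$3)^2 + (p$4)^2 \<le> 1"
  proof -
    have "a^2 * (1 - (p$3)^2 - (p$4)^2) \<ge> 0" using pM by (metis add_nonneg_nonneg zero_le_power2)
    then show ?thesis using a by (simp add: zero_le_mult_iff)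
  qed
  then have s0le: "s0 \<le> 1" unfolding s0_def by (simp add: real_sqrt_le_1_iff)
  define c0 where "c0 = sqrt (1 - s0^2)"
  have c0: "0 \<le> c0" "c0 \<le> 1" "c0^2 = 1 - s0^2" unfolding c0_def using s0le s0nn
    by (auto simp: power_le_one)
  define th where "th = arccos c0"
  have th: "0 \<le> th" "th \<le> pi/2" "cos th = c0" unfolding th_def using c0 arccos_le_pi2[of c0]
    by (auto intro: arccos_lbound)
  have "sin th = sqrt (1 - c0^2)" unfolding th_def using c0 by (simp add: sin_arccos)
  then have sth: "sin th = s0" using c0 s0nn by simp
  obtain be where be: "p$3 = s0 * cos be" "p$4 = s0 * sin be" using circ[OF s0nn s0sq[symmetric]] by blast
  have "(p$1)^2 + (p$2)^2 = (a * c0)^2" using pM s0sq c0 by (simp add: power_mult_distrib)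
  then obtain al where al: "p$1 = (a*c0) * cos al" "p$2 = (a*c0) * sin al"
    using circ[of "a*c0"] a c0 by fastforce
  have "p = Psi a th al be" unfolding Psi_def using al be th sth by (simp add: vec4_eq)
  then show ?thesis using th by blast
qed

lemma decomp: "x = (x \<bullet> E1 al) *\<^sub>R E1 al + (x \<bullet> E2 be) *\<^sub>R E2 be + (x \<bullet> E3 al) *\<^sub>R E3 al + (x \<bullet> E4 be) *\<^sub>R E4 be"
  unfolding Pdefs apply (simp add: vec4_eq inner4)
  using sin_cos_squared_add[of al] sin_cos_squared_add[of be] by algebra




definition ht :: "real \<Rightarrow> (real^4 \<Rightarrow> real^4) \<Rightarrow> real \<Rightarrow> real \<Rightarrow> real \<Rightarrow> real" where
  "ht a X th al be = X (Psi a th al be) \<bullet> Pt a th al be"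
definition ha :: "real \<Rightarrow> (real^4 \<Rightarrow> real^4) \<Rightarrow> real \<Rightarrow> real \<Rightarrow> real \<Rightarrow> real" where
  "ha a X th al be = X (Psi a th al be) \<bullet> Pa a th al"
definition hb :: "real \<Rightarrow> (real^4 \<Rightarrow> real^4) \<Rightarrow> real \<Rightarrow> real \<Rightarrow> real \<Rightarrow> real" where
  "hb a X th al be = X (Psi a th al be) \<bullet> Pb th be"
definition cP :: "real \<Rightarrow> (real^4 \<Rightarrow> real^4) \<Rightarrow> real \<Rightarrow> real \<Rightarrow> real \<Rightarrow> real" where
  "cP a X th al be = X (Psi a th al be) \<bullet> E1 al"
definition cQ :: "real \<Rightarrow> (real^4 \<Rightarrow> real^4) \<Rightarrow> real \<Rightarrow> real \<Rightarrow> real \<Rightarrow> real" where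
  "cQ a X th al be = X (Psi a th al be) \<bullet> E2 be"
definition cT :: "real \<Rightarrow> (real^4 \<Rightarrow> real^4) \<Rightarrow> real \<Rightarrow> real \<Rightarrow> real \<Rightarrow> real" where
  "cT a X th al be = X (Psi a th al be) \<bullet> E3 al"
definition cS :: "real \<Rightarrow> (real^4 \<Rightarrow> real^4) \<Rightarrow> real \<Rightarrow> real \<Rightarrow> real \<Rightarrow> real" where
  "cS a X th al be = X (Psi a th al be) \<bullet> E4 be"

lemma Pt_dec: "Pt a th al be = (-(a * sin th)) *\<^sub>R E1 al + cos th *\<^sub>R E2 be"
  unfolding Pdefs by (simp add: vec4_eq)
lemma Pa_dec: "Pa a th al = (a * cos th) *\<^sub>R E3 al"
  unfolding Pdefs by (simp add: vec4_eq)
lemma Pb_dec: "Pb th be = sin th *\<^sub>R E4 be"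
  unfolding Pdefs by (simp add: vec4_eq)
lemma Psi_dec: "Psi a th al be = (a * cos th) *\<^sub>R E1 al + sin th *\<^sub>R E2 be"
  unfolding Pdefs by (simp add: vec4_eq)
lemma nPsi_dec: "normal_a a (Psi a th al be) = (a * cos th) *\<^sub>R E1 al + (a^2 * sin th) *\<^sub>R E2 be"
  unfolding Pdefs normal_a_def by (simp add: vec4_eq power2_eq_square)

lemma iPt: "y \<bullet> Pt a th al be = -(a * sin th) * (y \<bullet> E1 al) + cos th * (y \<bullet> E2 be)"
  unfolding Pt_dec by (simp add: inner_add_right inner_diff_right algebra_simps)
lemma iPsi: "y \<bullet> Psi a th al be = (a * cos th) * (y \<bullet> E1 al) + sin th * (y \<bullet> E2 be)"
  unfolding Psi_dec by (simp add: inner_add_right inner_diff_right algebra_simps)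

lemma ht_dec: "ht a X th al be = -(a * sin th) * cP a X th al be + cos th * cQ a X th al be"
  unfolding ht_def cP_def cQ_def iPt ..
lemma ha_dec: "ha a X th al be = a * cos th * cT a X th al be"
  unfolding ha_def cT_def Pa_dec by simp
lemma hb_dec: "hb a X th al be = sin th * cS a X th al be"
  unfolding hb_def cS_def Pb_dec by simp

context
  fixes a :: real and X :: "real^4 \<Rightarrow> real^4"
  assumes apos: "0 < a" and K: "Killing a X"
begin

lemma vfX: "vector_field a X" using K unfolding Killing_def by blast

lemma dX: "(X has_derivative frechet_derivative X (at (Psi a th al be))) (at (Psi a th al be))"
  using vf_deriv[OF vfX Psi_Ma] .

lemma KP: "frechet_derivative X (at (Psi a th al be)) v \<bullet> w + frechet_derivative X (at (Psi a th al be)) w \<bullet> v = 0"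
  if "v \<in> {Pt a th al be, Pa a th al, Pb th be}" "w \<in> {Pt a th al be, Pa a th al, Pb th be}"
  using that apos Killing_pt[OF _ K Psi_Ma] tan_Pt tan_Pa tan_Pb by auto

lemma tang: "cos th * cP a X th al be + a * sin th * cQ a X th al be = 0"
proof -
  have "normal_a a (Psi a th al be) \<bullet> X (Psi a th al be) = 0" using vf_tan[OF vfX Psi_Ma] .
  then have "a * (cos th * cP a X th al be + a * sin th * cQ a X th al be) = 0"
    unfolding nPsi_dec cP_def cQ_def by (simp add: inner_add_left inner_commute algebra_simps power2_eq_square)
  then show ?thesis using apos by simp
qed

lemma D_tt: "((\<lambda>t. ht a X t al be) has_real_derivative
    (-(a * cos th * cP a X th al be + sin th * cQ a X th al be))) (at th)"
proof -
  let ?D = "frechet_derivative X (at (Psi a th al be))"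
  have k: "?D (Pt a th al be) \<bullet> Pt a th al be = 0" using KP[of "Pt a th al be" th al be "Pt a th al be"] by simp
  show ?thesis unfolding ht_def
    apply (rule DERIV_cong[OF chain_inner[OF dX dPsi_t dPt_t]])
    unfolding k cP_def cQ_def inner_minus_right iPsi by simp
qed

lemma D_ta: "((\<lambda>t. ht a X th t be) has_real_derivative deriv (\<lambda>t. ht a X th t be) al) (at al) \<and>
  ((\<lambda>t. ha a X t al be) has_real_derivative
    (-2 * a * sin th * cT a X th al be - deriv (\<lambda>t. ht a X th t be) al)) (at th)"
proof -
  let ?D = "frechet_derivative X (at (Psi a th al be))"
  have k: "?D (Pt a th al be) \<bullet> Pa a th al = - (?D (Pa a th al) \<bullet> Pt a th al be)"
    using KP[of "Pt a th al be" th al be "Pa a th al"] by simp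
  have d1: "((\<lambda>t. ht a X th t be) has_real_derivative (?D (Pa a th al) \<bullet> Pt a th al be + X (Psi a th al be) \<bullet> (-(a * sin th)) *\<^sub>R E3 al)) (at al)"
    unfolding ht_def by (rule chain_inner[OF dX dPsi_a dPt_a])
  have d2: "((\<lambda>t. ha a X t al be) has_real_derivative (?D (Pt a th al be) \<bullet> Pa a th al + X (Psi a th al be) \<bullet> (-(a * sin th)) *\<^sub>R E3 al)) (at th)"
    unfolding ha_def by (rule chain_inner[OF dX dPsi_t dPa_t])
  have e: "deriv (\<lambda>t. ht a X th t be) al = ?D (Pa a th al) \<bullet> Pt a th al be + X (Psi a th al be) \<bullet> (-(a * sin th)) *\<^sub>R E3 al"
    using DERIV_imp_deriv[OF d1] .
  show ?thesis using d1 d2 unfolding e k cT_def by (auto elim!: DERIV_cong)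
qed

lemma D_aa: "((\<lambda>t. ha a X th t be) has_real_derivative (-(a * cos th) * cP a X th al be)) (at al)"
proof -
  let ?D = "frechet_derivative X (at (Psi a th al be))"
  have k: "?D (Pa a th al) \<bullet> Pa a th al = 0" using KP[of "Pa a th al" th al be "Pa a th al"] by simp
  show ?thesis unfolding ha_def
    apply (rule DERIV_cong[OF chain_inner[OF dX dPsi_a dPa_a]])
    unfolding k cP_def by simp
qed

lemma D_tb: "((\<lambda>t. ht a X th al t) has_real_derivative deriv (\<lambda>t. ht a X th al t) be) (at be) \<and>
  ((\<lambda>t. hb a X t al be) has_real_derivative
    (2 * cos th * cS a X th al be - deriv (\<lambda>t. ht a X th al t) be)) (at th)"
proof -
  let ?D = "frechet_derivative X (at (Psi a th al be))"
  have k: "?D (Pt a th al be) \<bullet> Pb th be = - (?D (Pb th be) \<bullet> Pt a th al be)"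
    using KP[of "Pt a th al be" th al be "Pb th be"] by simp
  have d1: "((\<lambda>t. ht a X th al t) has_real_derivative (?D (Pb th be) \<bullet> Pt a th al be + X (Psi a th al be) \<bullet> cos th *\<^sub>R E4 be)) (at be)"
    unfolding ht_def by (rule chain_inner[OF dX dPsi_b dPt_b])
  have d2: "((\<lambda>t. hb a X t al be) has_real_derivative (?D (Pt a th al be) \<bullet> Pb th be + X (Psi a th al be) \<bullet> cos th *\<^sub>R E4 be)) (at th)"
    unfolding hb_def by (rule chain_inner[OF dX dPsi_t dPb_t])
  have e: "deriv (\<lambda>t. ht a X th al t) be = ?D (Pb th be) \<bullet> Pt a th al be + X (Psi a th al be) \<bullet> cos th *\<^sub>R E4 be"
    using DERIV_imp_deriv[OF d1] .
  show ?thesis using d1 d2 unfolding e k cS_def by (auto elim!: DERIV_cong)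
qed

lemma D_bb: "((\<lambda>t. hb a X th al t) has_real_derivative (-(sin th) * cQ a X th al be)) (at be)"
proof -
  let ?D = "frechet_derivative X (at (Psi a th al be))"
  have k: "?D (Pb th be) \<bullet> Pb th be = 0" using KP[of "Pb th be" th al be "Pb th be"] by simp
  show ?thesis unfolding hb_def
    apply (rule DERIV_cong[OF chain_inner[OF dX dPsi_b dPb_b]])
    unfolding k cQ_def by simp
qed

lemma D_ab: "((\<lambda>t. ha a X th al t) has_real_derivative deriv (\<lambda>t. ha a X th al t) be) (at be) \<and>
  ((\<lambda>t. hb a X th t be) has_real_derivative (- deriv (\<lambda>t. ha a X th al t) be)) (at al)"
proof -
  let ?D = "frechet_derivative X (at (Psi a th al be))"
  have k: "?D (Pa a th al) \<bullet> Pb th be = - (?D (Pb th be) \<bullet> Pa a th al)"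
    using KP[of "Pa a th al" th al be "Pb th be"] by simp
  have d1: "((\<lambda>t. ha a X th al t) has_real_derivative (?D (Pb th be) \<bullet> Pa a th al + X (Psi a th al be) \<bullet> 0)) (at be)"
    unfolding ha_def by (rule chain_inner[OF dX dPsi_b has_vector_derivative_const])
  have d2: "((\<lambda>t. hb a X th t be) has_real_derivative (?D (Pa a th al) \<bullet> Pb th be + X (Psi a th al be) \<bullet> 0)) (at al)"
    unfolding hb_def by (rule chain_inner[OF dX dPsi_a has_vector_derivative_const])
  have e: "deriv (\<lambda>t. ha a X th al t) be = ?D (Pb th be) \<bullet> Pa a th al + X (Psi a th al be) \<bullet> 0"
    using DERIV_imp_deriv[OF d1] .
  show ?thesis using d1 d2 unfolding e k by (auto elim!: DERIV_cong)
qed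

lemma D_T: "((\<lambda>t. cT a X t al be) has_real_derivative deriv (\<lambda>t. cT a X t al be) th) (at th)"
proof -
  have "((\<lambda>t. cT a X t al be) has_real_derivative (frechet_derivative X (at (Psi a th al be)) (Pt a th al be) \<bullet> E3 al + X (Psi a th al be) \<bullet> 0)) (at th)"
    unfolding cT_def by (rule chain_inner[OF dX dPsi_t has_vector_derivative_const])
  then show ?thesis using DERIV_imp_deriv by metis
qed

lemma D_S: "((\<lambda>t. cS a X t al be) has_real_derivative deriv (\<lambda>t. cS a X t al be) th) (at th)"
proof -
  have "((\<lambda>t. cS a X t al be) has_real_derivative (frechet_derivative X (at (Psi a th al be)) (Pt a th al be) \<bullet> E4 be + X (Psi a th al be) \<bullet> 0)) (at th)"
    unfolding cS_def by (rule chain_inner[OF dX dPsi_t has_vector_derivative_const])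
  then show ?thesis using DERIV_imp_deriv by metis
qed

end



definition rho :: "real \<Rightarrow> real \<Rightarrow> real" where
  "rho a t = sqrt ((cos t)^2 + a^2 * (sin t)^2)"

lemma rho2_pos: fixes a t :: real shows "a \<noteq> 0 \<Longrightarrow> (cos t)^2 + a^2 * (sin t)^2 > 0"
proof -
  assume a: "a \<noteq> 0"
  show ?thesis
  proof (cases "cos t = 0")
    case True
    then have "(sin t)^2 = 1" using sin_cos_squared_add[of t] by simp
    then show ?thesis using True a by simp
  next
    case False
    then show ?thesis by (simp add: add_pos_nonneg)
  qed
qed

lemma rho_pos: "a \<noteq> 0 \<Longrightarrow> rho a t > 0"
  unfolding rho_def using rho2_pos by simp

lemma rho_sq: "(rho a t)^2 = (cos t)^2 + a^2 * (sin t)^2"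
  unfolding rho_def by (simp add: add_nonneg_nonneg)

lemma rho_0: "rho a 0 = 1" unfolding rho_def by simp

lemma rho_deriv: "a \<noteq> 0 \<Longrightarrow> ((\<lambda>t. rho a t) has_real_derivative ((a^2 - 1) * sin t * cos t / rho a t)) (at t)"
proof -
  assume a: "a \<noteq> 0"
  have i: "((\<lambda>t. (cos t)^2 + a^2 * (sin t)^2) has_real_derivative (2 * cos t * (- sin t) + a^2 * (2 * sin t * cos t))) (at t)"
    by (rule derivative_eq_intros refl | simp)+
  have p: "0 < (cos t)^2 + a^2 * (sin t)^2" using rho2_pos[OF a] .
  show ?thesis unfolding rho_def
    apply (rule DERIV_cong[OF DERIV_chain2[OF DERIV_real_sqrt[OF p] i]])
    using p by (simp add: field_simps)
qed

context
  fixes a :: real and X :: "real^4 \<Rightarrow> real^4"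
  assumes apos: "0 < a" and K: "Killing a X"
begin

lemmas tang' = tang[OF apos K] and D_tt' = D_tt[OF apos K] and D_ta' = D_ta[OF apos K]
  and D_aa' = D_aa[OF apos K] and D_tb' = D_tb[OF apos K] and D_bb' = D_bb[OF apos K]
  and D_ab' = D_ab[OF apos K] and D_T' = D_T[OF apos K] and D_S' = D_S[OF apos K]

lemma anz: "a \<noteq> 0" using apos by simp

lemma cP_ht: "cP a X th al be = -(a * sin th) * ht a X th al be / (rho a th)^2"
  and cQ_ht: "cQ a X th al be = cos th * ht a X th al be / (rho a th)^2"
proof -
  have r: "(rho a th)^2 \<noteq> 0" using rho_pos[OF anz, of th] by simp
  have t: "cos th * cP a X th al be + a * sin th * cQ a X th al be = 0" by (rule tang')
  have h: "ht a X th al be = -(a * sin th) * cP a X th al be + cos th * cQ a X th al be" by (rule ht_dec)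
  have s: "(sin th)^2 + (cos th)^2 = 1" by simp
  have "(rho a th)^2 * cP a X th al be = -(a * sin th) * ht a X th al be"
    unfolding rho_sq h using t s by algebra
  then show "cP a X th al be = -(a * sin th) * ht a X th al be / (rho a th)^2" using r by (simp add: field_simps)
  have "(rho a th)^2 * cQ a X th al be = cos th * ht a X th al be"
    unfolding rho_sq h using t s by algebra
  then show "cQ a X th al be = cos th * ht a X th al be / (rho a th)^2" using r by (simp add: field_simps)
qed

lemma ht_rho: "ht a X th al be = rho a th * ht a X 0 al be"
proof -
  have "\<exists>c. \<forall>t\<in>UNIV. ht a X t al be / rho a t = c"
  proof (rule has_field_derivative_zero_constant)
    fix t :: real
    have r: "rho a t > 0" using rho_pos[OF anz] .
    have d: "((\<lambda>t. ht a X t al be / rho a t) has_real_derivative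
      ((-(a * cos t * cP a X t al be + sin t * cQ a X t al be)) * rho a t - ht a X t al be * ((a^2 - 1) * sin t * cos t / rho a t)) / (rho a t * rho a t)) (at t)"
      by (rule DERIV_divide[OF D_tt' rho_deriv[OF anz]]) (use r in simp)
    have "(-(a * cos t * cP a X t al be + sin t * cQ a X t al be)) * rho a t - ht a X t al be * ((a^2 - 1) * sin t * cos t / rho a t) = 0"
      unfolding cP_ht cQ_ht using r by (simp add: field_simps power2_eq_square)
    then show "((\<lambda>t. ht a X t al be / rho a t) has_real_derivative 0) (at t within UNIV)"
      using d by simp
  qed simp
  then obtain c where "\<And>t. ht a X t al be / rho a t = c" by blast
  from this[of th] this[of 0] show ?thesis using rho_pos[OF anz, of th] by (simp add: rho_0 field_simps)
qed

end



definition gf :: "real \<Rightarrow> real \<Rightarrow> real" where "gf a t = rho a t / (cos t)^2"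
definition Iint :: "real \<Rightarrow> real \<Rightarrow> real" where
  "Iint a t = integral {-1..t} (gf a) - integral {-1..0} (gf a)"
definition qf :: "real \<Rightarrow> real \<Rightarrow> real" where "qf a t = a^2 * sin t / (cos t * rho a t)"

lemma cos_pos1: fixes t :: real shows "t \<in> {-1..1} \<Longrightarrow> cos t > 0"
proof -
  assume t: "t \<in> {-1..1}"
  have "-(pi/2) < t" "t < pi/2" using pi_gt3 t by auto
  then show ?thesis by (rule cos_gt_zero_pi)
qed

lemma gf_cont: "continuous_on {-1..1} (gf a)"
proof -
  have c: "cos t \<noteq> 0" if "t \<in> {-1..1}" for t :: real using cos_pos1[OF that] by simp
  show ?thesis unfolding gf_def rho_def by (intro continuous_intros) (auto dest: c)
qed

lemma I_deriv_within: "t \<in> {-1..1} \<Longrightarrow> (Iint a has_real_derivative gf a t) (at t within {-1..1})"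
  unfolding Iint_def[abs_def]
  using integral_has_real_derivative[OF gf_cont] by (auto intro!: derivative_eq_intros)

lemma I_deriv: "t \<in> {-1<..<1} \<Longrightarrow> (Iint a has_real_derivative gf a t) (at t)"
  using I_deriv_within[of t a] at_within_interior[of t "{-1..1::real}"] by auto

lemma I_0: "Iint a 0 = 0" unfolding Iint_def by simp

lemma gf_pos: "a \<noteq> 0 \<Longrightarrow> t \<in> {-1..1} \<Longrightarrow> gf a t > 0"
proof -
  assume a: "a \<noteq> 0" and t: "t \<in> {-1..1}"
  have "cos t > 0" using cos_pos1[OF t] .
  then show ?thesis unfolding gf_def using rho_pos[OF a, of t] by (auto intro!: divide_pos_pos)
qed

lemma I_half: "a \<noteq> 0 \<Longrightarrow> Iint a (1/2) > 0"
proof -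
  assume a: "a \<noteq> 0"
  have "\<And>x. 0 \<le> x \<Longrightarrow> x \<le> 1/2 \<Longrightarrow> DERIV (Iint a) x :> gf a x" using I_deriv by auto
  from MVT2[of 0 "1/2", OF _ this] obtain z where z: "0 < z" "z < 1/2" "Iint a (1/2) - Iint a 0 = (1/2 - 0) * gf a z" by auto
  then show ?thesis using gf_pos[OF a, of z] I_0 by auto
qed

lemma q_alg:
  fixes A b c s r :: real
  assumes r: "r > 0" and c: "c \<noteq> 0" and s: "s^2 + c^2 = 1"
  shows "(A * c * (c * r) - A * s * ((- s) * r + c * (b * s * c / r))) / ((c * r) * (c * r)) =
    A * (r^2 - b * s^2 * c^2) / (c^2 * r^3)"
proof -
  have "A * c * (c * r) - A * s * ((- s) * r + c * (b * s * c / r)) = A * (r^2 * (s^2 + c^2) - b * s^2 * c^2) / r"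
    using r by (simp add: field_simps power2_eq_square)
  also have "\<dots> = A * (r^2 - b * s^2 * c^2) / r" using s by simp
  finally have e: "A * c * (c * r) - A * s * ((- s) * r + c * (b * s * c / r)) = A * (r^2 - b * s^2 * c^2) / r" .
  show ?thesis unfolding e using r c by (simp add: field_simps power2_eq_square power3_eq_cube)
qed

lemma q_deriv:
  assumes a: "a \<noteq> 0" and c: "cos t \<noteq> 0"
  shows "(qf a has_real_derivative a^2 * ((rho a t)^2 - (a^2 - 1) * (sin t)^2 * (cos t)^2) / ((cos t)^2 * (rho a t)^3)) (at t)"
proof -
  have r: "rho a t > 0" using rho_pos[OF a] .
  have d: "(qf a has_real_derivative
     ((a^2 * cos t) * (cos t * rho a t) - a^2 * sin t * ((- sin t) * rho a t + cos t * ((a^2 - 1) * sin t * cos t / rho a t))) / ((cos t * rho a t) * (cos t * rho a t))) (at t)"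
    unfolding qf_def[abs_def]
    by (rule derivative_eq_intros refl rho_deriv[OF a] | use r c in simp)+
  have s: "(sin t)^2 + (cos t)^2 = 1" by simp
  show ?thesis
    apply (rule DERIV_cong[OF d])
    using q_alg[OF r c s, of "a^2" "a^2 - 1"] by (simp add: mult.assoc)
qed

lemma key_alg:
  fixes a u :: real
  assumes a: "a > 0" "a \<noteq> 1" and u: "0 < u" "u < 1"
  shows "(1 + (a^2-1)*u) - (a^2-1) * u * (1 - u) - (1 + (a^2-1)*u)^2 \<noteq> 0"
proof -
  define b where "b = a^2 - 1"
  have b: "b \<noteq> 0" "b > -1" unfolding b_def using a
    by (auto simp: power2_eq_1_iff)
  have e: "(1 + b*u) - b * u * (1 - u) - (1 + b*u)^2 = b * u * ((1 - b) * u - 2)"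
    by (simp add: algebra_simps power2_eq_square)
  have "(1 - b) * u < 2"
  proof (cases "b \<ge> 1")
    case True then show ?thesis using u by (smt (verit) mult_nonpos_nonneg)
  next
    case False then have "(1 - b) * u < (1 - b) * 1" using u b by (intro mult_strict_left_mono) auto
    then show ?thesis using b by simp
  qed
  then show ?thesis unfolding b_def[symmetric] e using b u by simp
qed




context
  fixes a :: real and X :: "real^4 \<Rightarrow> real^4"
  assumes apos: "0 < a" and K: "Killing a X"
begin

lemmas D_taG = D_ta[OF apos K] and D_aaG = D_aa[OF apos K]
  and cP_ht' = cP_ht[OF apos K] and ht_rho' = ht_rho[OF apos K]

lemma anz': "a \<noteq> 0" using apos by simp

lemma S2: "deriv (\<lambda>t. ht a X th t be) al = rho a th * deriv (\<lambda>t. ht a X 0 t be) al"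
proof -
  have fn: "(\<lambda>t. ht a X th t be) = (\<lambda>t. rho a th * ht a X 0 t be)" by (rule ext, rule ht_rho')
  have d0: "((\<lambda>t. ht a X 0 t be) has_real_derivative deriv (\<lambda>t. ht a X 0 t be) al) (at al)"
    using D_taG[of 0 be al] by blast
  show ?thesis unfolding fn by (rule DERIV_imp_deriv[OF DERIV_cmult[OF d0]])
qed

lemma cos2_deriv: "((\<lambda>t. (cos t)^2) has_real_derivative (2 * cos t * (- sin t))) (at t)"
  by (rule derivative_eq_intros refl | simp)+

lemma S3: assumes t: "t \<in> {-1..1}"
  shows "ha a X t al be = (cos t)^2 * (ha a X 0 al be - deriv (\<lambda>s. ht a X 0 s be) al * Iint a t)"
proof -
  define f1 where "f1 = deriv (\<lambda>s. ht a X 0 s be) al"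
  have "\<exists>k. \<forall>x\<in>{-1..1}. ha a X x al be / (cos x)^2 + f1 * Iint a x = k"
  proof (rule has_field_derivative_zero_constant)
    fix x :: real assume x: "x \<in> {-1..1}"
    have c: "cos x > 0" using cos_pos1[OF x] .
    have dh: "((\<lambda>t. ha a X t al be) has_real_derivative (-2 * a * sin x * cT a X x al be - rho a x * f1)) (at x)"
      using D_taG[of x be al] S2[of x be al] unfolding f1_def by simp
    have d: "((\<lambda>t. ha a X t al be / (cos t)^2 + f1 * Iint a t) has_real_derivative
      ((-2 * a * sin x * cT a X x al be - rho a x * f1) * (cos x)^2 - ha a X x al be * (2 * cos x * (- sin x))) / ((cos x)^2 * (cos x)^2)
        + f1 * gf a x) (at x within {-1..1})"
      apply (intro DERIV_add DERIV_cmult I_deriv_within[OF x])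
      apply (rule has_field_derivative_at_within)
      apply (rule DERIV_divide[OF dh cos2_deriv])
      using c by simp
    have "((-2 * a * sin x * cT a X x al be - rho a x * f1) * (cos x)^2 - ha a X x al be * (2 * cos x * (- sin x))) / ((cos x)^2 * (cos x)^2)
        + f1 * gf a x = 0"
      unfolding ha_dec gf_def using c by (simp add: field_simps power2_eq_square)
    then show "((\<lambda>t. ha a X t al be / (cos t)^2 + f1 * Iint a t) has_real_derivative 0) (at x within {-1..1})"
      using d by simp
  qed simp
  then obtain k where k: "\<And>x. x \<in> {-1..1} \<Longrightarrow> ha a X x al be / (cos x)^2 + f1 * Iint a x = k" by blast
  have "k = ha a X 0 al be" using k[of 0] by (simp add: I_0)
  then have "ha a X t al be / (cos t)^2 + f1 * Iint a t = ha a X 0 al be" using k[OF t] by simp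
  then show ?thesis unfolding f1_def[symmetric] using cos_pos1[OF t] by (simp add: field_simps)
qed

lemma S4: "((\<lambda>s. ha a X t s be) has_real_derivative (a^2 * sin t * cos t * ht a X 0 al be / rho a t)) (at al)"
proof -
  have r: "rho a t > 0" using rho_pos[OF anz'] .
  have "-(a * cos t) * cP a X t al be = a^2 * sin t * cos t * ht a X 0 al be / rho a t"
    unfolding cP_ht' ht_rho'[of t al be] using r by (simp add: field_simps power2_eq_square)
  then show ?thesis using D_aaG[of t be al] by simp
qed

lemma S5: assumes t: "t \<in> {-1..1}"
  shows "((\<lambda>s. deriv (\<lambda>r. ht a X 0 r be) s * Iint a t) has_real_derivative (- qf a t * ht a X 0 al be)) (at al)"
proof -
  have c: "cos t > 0" using cos_pos1[OF t] .
  have r: "rho a t > 0" using rho_pos[OF anz'] .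
  have fn: "(\<lambda>s. deriv (\<lambda>r. ht a X 0 r be) s * Iint a t) = (\<lambda>s. ha a X 0 s be - ha a X t s be / (cos t)^2)"
  proof
    fix s show "deriv (\<lambda>r. ht a X 0 r be) s * Iint a t = ha a X 0 s be - ha a X t s be / (cos t)^2"
      using S3[OF t, of s be] c by (simp add: field_simps)
  qed
  have d: "((\<lambda>s. ha a X 0 s be - ha a X t s be / (cos t)^2) has_real_derivative
     (a^2 * sin 0 * cos 0 * ht a X 0 al be / rho a 0) - (a^2 * sin t * cos t * ht a X 0 al be / rho a t) / (cos t)^2) (at al)"
    by (intro DERIV_diff DERIV_cdivide S4)
  show ?thesis unfolding fn qf_def apply (rule DERIV_cong[OF d])
    using c r by (simp add: field_simps power2_eq_square)
qed

lemma S7: assumes t: "t \<in> {-1..1}"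
  shows "(- qf a (1/2) * ht a X 0 al be / Iint a (1/2)) * Iint a t = - qf a t * ht a X 0 al be"
proof -
  have h: "(1/2::real) \<in> {-1..1}" by simp
  have I: "Iint a (1/2) \<noteq> 0" using I_half[OF anz'] by simp
  have fn: "(\<lambda>s. deriv (\<lambda>r. ht a X 0 r be) s) = (\<lambda>s. deriv (\<lambda>r. ht a X 0 r be) s * Iint a (1/2) / Iint a (1/2))"
    using I by simp
  have d6: "((\<lambda>s. deriv (\<lambda>r. ht a X 0 r be) s) has_real_derivative (- qf a (1/2) * ht a X 0 al be / Iint a (1/2))) (at al)"
    apply (subst fn) by (rule DERIV_cdivide[OF S5[OF h]])
  have d7: "((\<lambda>s. deriv (\<lambda>r. ht a X 0 r be) s * Iint a t) has_real_derivative (- qf a (1/2) * ht a X 0 al be / Iint a (1/2)) * Iint a t) (at al)"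
    by (rule DERIV_cmult_right[OF d6])
  show ?thesis using DERIV_unique[OF d7 S5[OF t]] .
qed

lemma S8: assumes a1: "a \<noteq> 1" shows "ht a X 0 al be = 0"
proof -
  define f where "f = ht a X 0 al be"
  define f2 where "f2 = - qf a (1/2) * ht a X 0 al be / Iint a (1/2)"
  have G0: "f2 * Iint a t + qf a t * f = 0" if "t \<in> {-1..1}" for t
    using S7[OF that] unfolding f_def f2_def by simp
  have Gd: "f2 * gf a t + (a^2 * ((rho a t)^2 - (a^2 - 1) * (sin t)^2 * (cos t)^2) / ((cos t)^2 * (rho a t)^3)) * f = 0"
    if t: "t \<in> {-1<..<1}" for t
  proof -
    have tc: "t \<in> {-1..1}" using t by auto
    have c: "cos t \<noteq> 0" using cos_pos1[OF tc] by simp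
    have d1: "((\<lambda>t. f2 * Iint a t + qf a t * f) has_real_derivative
       f2 * gf a t + (a^2 * ((rho a t)^2 - (a^2 - 1) * (sin t)^2 * (cos t)^2) / ((cos t)^2 * (rho a t)^3)) * f) (at t)"
      by (intro DERIV_add DERIV_cmult DERIV_cmult_right I_deriv[OF t] q_deriv[OF anz' c])
    have d2: "((\<lambda>t. f2 * Iint a t + qf a t * f) has_real_derivative 0) (at t)"
    proof (rule has_field_derivative_transform_within_open[OF DERIV_const _ t])
      show "open {-1<..<1::real}" by simp
      fix x :: real assume "x \<in> {-1<..<1}"
      then show "0 = f2 * Iint a x + qf a x * f" using G0[of x] by auto
    qed
    show ?thesis using DERIV_unique[OF d1 d2] .
  qed
  have z: "(0::real) \<in> {-1<..<1}" by simp
  have e0: "f2 + a^2 * f = 0" using Gd[OF z] by (simp add: gf_def rho_0)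
  have hh: "(1/2::real) \<in> {-1<..<1}" by simp
  define s where "s = sin (1/2::real)"
  define c where "c = cos (1/2::real)"
  define r where "r = rho a (1/2)"
  have r: "r > 0" unfolding r_def using rho_pos[OF anz'] .
  have cpos: "c > 0" unfolding c_def using cos_pos1[of "1/2"] by simp
  have spos: "s > 0" unfolding s_def using pi_gt3 by (intro sin_gt_zero) auto
  have sc: "s^2 + c^2 = 1" unfolding s_def c_def by simp
  have r2: "r^2 = 1 + (a^2 - 1) * s^2" unfolding r_def s_def rho_sq
    using sin_cos_squared_add[of "1/2::real"] by algebra
  have e1: "f2 * (r / c^2) + (a^2 * (r^2 - (a^2 - 1) * s^2 * c^2) / (c^2 * r^3)) * f = 0"
    using Gd[OF hh] unfolding gf_def s_def c_def r_def .
  have "a^2 * f * (r^2 - (a^2 - 1) * s^2 * c^2 - r^4) = 0"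
  proof -
    have eq: "(f2 * r^4 + a^2 * (r^2 - (a^2 - 1) * s^2 * c^2) * f) / (c^2 * r^3) =
      f2 * (r / c^2) + (a^2 * (r^2 - (a^2 - 1) * s^2 * c^2) / (c^2 * r^3)) * f"
      using r cpos by (simp add: field_simps eval_nat_numeral)
    have "f2 * r^4 + a^2 * (r^2 - (a^2 - 1) * s^2 * c^2) * f = 0"
      using e1 r cpos unfolding eq[symmetric] by simp
    moreover have "f2 = - (a^2 * f)" using e0 by simp
    ultimately show ?thesis by (simp add: algebra_simps)
  qed
  moreover have "r^2 - (a^2 - 1) * s^2 * c^2 - r^4 \<noteq> 0"
  proof -
    have c2p: "0 < c^2" using cpos by simp
    have u: "0 < s^2" "s^2 < 1" using spos apply simp using c2p sc by linarith
    have c2: "c^2 = 1 - s^2" using sc by simp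
    have r4: "r^4 = (1 + (a^2 - 1) * s^2)^2" using r2 by (metis power2_eq_square power4_eq_xxxx power_mult_distrib mult.assoc)
    show ?thesis unfolding r4 r2 c2 using key_alg[OF apos a1 u] by (simp add: algebra_simps)
  qed
  ultimately show ?thesis unfolding f_def using anz' by simp
qed

end



lemma const_R: fixes f :: "real \<Rightarrow> real"
  assumes "\<And>x. (f has_real_derivative 0) (at x)" shows "f x = f y"
proof -
  have "\<exists>c. \<forall>x\<in>UNIV. f x = c"
    by (rule has_field_derivative_zero_constant) (auto intro: has_field_derivative_at_within assms)
  then show ?thesis by auto
qed

lemma const_on: fixes f :: "real \<Rightarrow> real"
  assumes "convex S" "\<And>x. x \<in> S \<Longrightarrow> (f has_real_derivative 0) (at x)" "x \<in> S" "y \<in> S"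
  shows "f x = f y"
proof -
  have "\<exists>c. \<forall>x\<in>S. f x = c"
    by (rule has_field_derivative_zero_constant) (auto intro: has_field_derivative_at_within assms)
  then show ?thesis using assms by auto
qed

lemma deriv_zero_fun: "(\<And>t. f t = (0::real)) \<Longrightarrow> deriv f x = 0"
proof -
  assume "\<And>t. f t = 0"
  then have "f = (\<lambda>_. 0)" by auto
  then show ?thesis by simp
qed

context
  fixes a :: real and X :: "real^4 \<Rightarrow> real^4"
  assumes apos: "0 < a" and a1: "a \<noteq> 1" and K: "Killing a X"
begin

lemmas D_ta'' = D_ta[OF apos K] and D_aa'' = D_aa[OF apos K] and D_tb'' = D_tb[OF apos K]
  and D_bb'' = D_bb[OF apos K] and D_ab'' = D_ab[OF apos K] and D_T'' = D_T[OF apos K]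
  and D_S'' = D_S[OF apos K]

lemma an: "a \<noteq> 0" using apos by simp

lemma ht0: "ht a X th al be = 0"
  using ht_rho[OF apos K, of th al be] S8[OF apos K a1] by simp

lemma P0: "cP a X th al be = 0" using cP_ht[OF apos K] ht0 by simp
lemma Q0: "cQ a X th al be = 0" using cQ_ht[OF apos K] ht0 by simp

lemma T_ode: "cos th * deriv (\<lambda>t. cT a X t al be) th = - sin th * cT a X th al be"
proof -
  have fn: "(\<lambda>t. ha a X t al be) = (\<lambda>t. (a * cos t) * cT a X t al be)" by (rule ext, rule ha_dec)
  have d1: "((\<lambda>t. (a * cos t) * cT a X t al be) has_real_derivative
      (a * (- sin th)) * cT a X th al be + (a * cos th) * deriv (\<lambda>t. cT a X t al be) th) (at th)"
    by (rule derivative_eq_intros refl D_T'' | simp)+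
  have d2: "((\<lambda>t. ha a X t al be) has_real_derivative (-2 * a * sin th * cT a X th al be)) (at th)"
    using D_ta''[of th be al] deriv_zero_fun[of "\<lambda>t. ht a X th t be", OF ht0] by simp
  have "(a * (- sin th)) * cT a X th al be + (a * cos th) * deriv (\<lambda>t. cT a X t al be) th = -2 * a * sin th * cT a X th al be"
    using DERIV_unique[OF d1 d2[unfolded fn]] .
  then have "a * (cos th * deriv (\<lambda>t. cT a X t al be) th) = a * (- sin th * cT a X th al be)"
    by (simp add: algebra_simps)
  then show ?thesis using mult_left_cancel[OF an] by blast
qed

lemma S_ode: "sin th * deriv (\<lambda>t. cS a X t al be) th = cos th * cS a X th al be"
proof -
  have fn: "(\<lambda>t. hb a X t al be) = (\<lambda>t. sin t * cS a X t al be)" by (rule ext, rule hb_dec)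
  have d1: "((\<lambda>t. sin t * cS a X t al be) has_real_derivative
      cos th * cS a X th al be + sin th * deriv (\<lambda>t. cS a X t al be) th) (at th)"
    by (rule derivative_eq_intros refl D_S'' | simp)+
  have d2: "((\<lambda>t. hb a X t al be) has_real_derivative (2 * cos th * cS a X th al be)) (at th)"
    using D_tb''[of th al be] deriv_zero_fun[of "\<lambda>t. ht a X th al t", OF ht0] by simp
  have "cos th * cS a X th al be + sin th * deriv (\<lambda>t. cS a X t al be) th = 2 * cos th * cS a X th al be"
    using DERIV_unique[OF d1 d2[unfolded fn]] .
  then show ?thesis by simp
qed

lemma T_form: assumes "0 \<le> th" "th \<le> pi/2" shows "cT a X th al be = cos th * cT a X 0 al be"
proof (cases "th = pi/2")
  case True
  show ?thesis unfolding True using T_ode[of "pi/2" al be] by simp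
next
  case False
  then have th: "th \<in> {-(pi/2)<..<pi/2}" using assms pi_gt3 by auto
  have "cT a X th al be / cos th = cT a X 0 al be / cos 0"
  proof (rule const_on[of "{-(pi/2)<..<pi/2}" "\<lambda>t. cT a X t al be / cos t"])
    fix x assume x: "x \<in> {-(pi/2)<..<pi/2}"
    then have c: "cos x > 0" by (intro cos_gt_zero_pi) auto
    have d: "((\<lambda>t. cT a X t al be / cos t) has_real_derivative
      (deriv (\<lambda>t. cT a X t al be) x * cos x - cT a X x al be * (- sin x)) / (cos x * cos x)) (at x)"
      by (rule DERIV_divide[OF D_T'']) (rule derivative_eq_intros refl | use c in simp)+
    then show "((\<lambda>t. cT a X t al be / cos t) has_real_derivative 0) (at x)"
      using T_ode[of x al be] by (simp add: algebra_simps)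
  qed (use th pi_gt3 in auto)
  moreover have "cos th > 0" using th by (intro cos_gt_zero_pi) auto
  ultimately show ?thesis by (simp add: field_simps)
qed

lemma S_form: assumes "0 \<le> th" "th \<le> pi/2" shows "cS a X th al be = sin th * cS a X (pi/2) al be"
proof (cases "th = 0")
  case True
  show ?thesis unfolding True using S_ode[of 0 al be] by simp
next
  case False
  then have th: "th \<in> {0<..<pi}" using assms pi_gt3 by auto
  have "cS a X th al be / sin th = cS a X (pi/2) al be / sin (pi/2)"
  proof (rule const_on[of "{0<..<pi}" "\<lambda>t. cS a X t al be / sin t"])
    fix x assume x: "x \<in> {0<..<pi}"
    then have c: "sin x > 0" by (intro sin_gt_zero) auto
    have d: "((\<lambda>t. cS a X t al be / sin t) has_real_derivative
      (deriv (\<lambda>t. cS a X t al be) x * sin x - cS a X x al be * cos x) / (sin x * sin x)) (at x)"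
      by (rule DERIV_divide[OF D_S'']) (rule derivative_eq_intros refl | use c in simp)+
    then show "((\<lambda>t. cS a X t al be / sin t) has_real_derivative 0) (at x)"
      using S_ode[of x al be] by (simp add: algebra_simps)
  qed (use th pi_gt3 in auto)
  moreover have "sin th > 0" using th by (intro sin_gt_zero) auto
  ultimately show ?thesis by (simp add: field_simps)
qed

lemma ha0_const: "ha a X 0 al be = ha a X 0 0 0"
proof -
  have db: "((\<lambda>t. ha a X 0 al t) has_real_derivative 0) (at x)" for al x
  proof -
    have hb0: "(\<lambda>t. hb a X 0 t x) = (\<lambda>t. 0)" by (rule ext) (simp add: hb_dec)
    have "((\<lambda>t. hb a X 0 t x) has_real_derivative (- deriv (\<lambda>t. ha a X 0 al t) x)) (at al)"
      using D_ab''[of 0 al x] by blast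
    then have "- deriv (\<lambda>t. ha a X 0 al t) x = 0" unfolding hb0 using DERIV_const DERIV_unique by blast
    then show ?thesis using D_ab''[of 0 al x] by simp
  qed
  have da: "((\<lambda>t. ha a X 0 t be) has_real_derivative 0) (at x)" for be x
    using D_aa''[of 0 be x] P0 by simp
  have "ha a X 0 al be = ha a X 0 al 0" using const_R[of "\<lambda>t. ha a X 0 al t", OF db] .
  also have "\<dots> = ha a X 0 0 0" using const_R[of "\<lambda>t. ha a X 0 t 0", OF da] .
  finally show ?thesis .
qed

lemma hb0_const: "hb a X (pi/2) al be = hb a X (pi/2) 0 0"
proof -
  have da: "((\<lambda>t. hb a X (pi/2) t be) has_real_derivative 0) (at x)" for be x
  proof -
    have ha0: "(\<lambda>t. ha a X (pi/2) x t) = (\<lambda>t. 0)" by (rule ext) (simp add: ha_dec)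
    have "deriv (\<lambda>t. ha a X (pi/2) x t) be = 0" unfolding ha0 by simp
    then show ?thesis using D_ab''[of "pi/2" x be] by simp
  qed
  have db: "((\<lambda>t. hb a X (pi/2) al t) has_real_derivative 0) (at x)" for al x
    using D_bb''[of "pi/2" al x] Q0 by simp
  have "hb a X (pi/2) al be = hb a X (pi/2) al 0" using const_R[of "\<lambda>t. hb a X (pi/2) al t", OF db] .
  also have "\<dots> = hb a X (pi/2) 0 0" using const_R[of "\<lambda>t. hb a X (pi/2) t 0", OF da] .
  finally show ?thesis .
qed

lemma X_form: assumes "0 \<le> th" "th \<le> pi/2"
  shows "X (Psi a th al be) = Yc (ha a X 0 0 0 / a^2) (hb a X (pi/2) 0 0) (Psi a th al be)"
proof -
  have T: "cT a X th al be = cos th * (ha a X 0 0 0 / a)"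
  proof -
    have "a * cT a X 0 al be = ha a X 0 0 0" using ha0_const[of al be] ha_dec[of a X 0 al be] by simp
    then have "cT a X 0 al be = ha a X 0 0 0 / a" using an by (simp add: field_simps)
    then show ?thesis using T_form[OF assms, of al be] by simp
  qed
  have S: "cS a X th al be = sin th * hb a X (pi/2) 0 0"
    using S_form[OF assms, of al be] hb0_const[of al be] hb_dec[of a X "pi/2" al be] by simp
  have "X (Psi a th al be) = cP a X th al be *\<^sub>R E1 al + cQ a X th al be *\<^sub>R E2 be + cT a X th al be *\<^sub>R E3 al + cS a X th al be *\<^sub>R E4 be"
    unfolding cP_def cQ_def cT_def cS_def by (rule decomp)
  also have "\<dots> = (cos th * (ha a X 0 0 0 / a)) *\<^sub>R E3 al + (sin th * hb a X (pi/2) 0 0) *\<^sub>R E4 be"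
    unfolding P0 Q0 T S by simp
  also have "\<dots> = Yc (ha a X 0 0 0 / a^2) (hb a X (pi/2) 0 0) (Psi a th al be)"
    unfolding Yc_def d_xi_def d_mu_def Pdefs using an by (simp add: vec4_eq field_simps power2_eq_square)
  finally show ?thesis .
qed

lemma X_all: "\<exists>c1 c2. \<forall>p\<in>Ma a. X p = c1 *\<^sub>R d_xi p + c2 *\<^sub>R d_mu p"
proof (intro exI ballI)
  fix p assume p: "p \<in> Ma a"
  obtain th al be where "0 \<le> th" "th \<le> pi/2" "p = Psi a th al be" using Psi_surj[OF apos p] by blast
  then show "X p = (ha a X 0 0 0 / a^2) *\<^sub>R d_xi p + (hb a X (pi/2) 0 0) *\<^sub>R d_mu p"
    using X_form unfolding Yc_def by blast
qed

end
theorem lemma5p1: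
  fixes a :: real
  assumes "a > 0" and "a \<noteq> 1"
  shows "Killing a d_xi \<and> Killing a d_mu
     \<and> (\<forall>c1 c2. (\<forall>p\<in>Ma a. c1 *\<^sub>R d_xi p + c2 *\<^sub>R d_mu p = 0) \<longrightarrow> c1 = 0 \<and> c2 = 0)
     \<and> (\<forall>X. Killing a X \<longleftrightarrow>
          (vector_field a X \<and> (\<exists>c1 c2. \<forall>p\<in>Ma a. X p = c1 *\<^sub>R d_xi p + c2 *\<^sub>R d_mu p)))"
proof -
  have an: "a \<noteq> 0" using assms by simp
  have indep: "c1 = 0 \<and> c2 = 0" if h: "\<forall>p\<in>Ma a. c1 *\<^sub>R d_xi p + c2 *\<^sub>R d_mu p = 0" for c1 c2
  proof -
    have p1: "vector [a, 0, 0, 0] \<in> Ma a" unfolding Ma_def by simp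
    have p2: "vector [0, 0, 1, 0] \<in> Ma a" unfolding Ma_def by simp
    have "c1 * a = 0" using h[rule_format, OF p1] unfolding d_xi_def d_mu_def by (simp add: vec4_eq)
    moreover have "c2 = 0" using h[rule_format, OF p2] unfolding d_xi_def d_mu_def by (simp add: vec4_eq)
    ultimately show ?thesis using an by simp
  qed
  have k1: "Killing a d_xi" unfolding d_xi_Yc by (rule Killing_of_agree[OF an vf_Yc]) simp
  have k2: "Killing a d_mu" unfolding d_mu_Yc by (rule Killing_of_agree[OF an vf_Yc]) simp
  have iff: "Killing a X \<longleftrightarrow>
          (vector_field a X \<and> (\<exists>c1 c2. \<forall>p\<in>Ma a. X p = c1 *\<^sub>R d_xi p + c2 *\<^sub>R d_mu p))" for X
  proof
  assume K: "Killing a X"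
  show "vector_field a X \<and> (\<exists>c1 c2. \<forall>p\<in>Ma a. X p = c1 *\<^sub>R d_xi p + c2 *\<^sub>R d_mu p)"
    using vfX[OF assms(1) K] X_all[OF assms K] by blast
next
  assume h: "vector_field a X \<and> (\<exists>c1 c2. \<forall>p\<in>Ma a. X p = c1 *\<^sub>R d_xi p + c2 *\<^sub>R d_mu p)"
  then obtain c1 c2 where c: "\<forall>p\<in>Ma a. X p = c1 *\<^sub>R d_xi p + c2 *\<^sub>R d_mu p" by blast
  have an: "a \<noteq> 0" using assms by simp
  show "Killing a X" by (rule Killing_of_agree[OF an, of X c1 c2]) (use h c in \<open>auto simp: Yc_def\<close>)
  qed
  show ?thesis using k1 k2 indep iff by blast
qed


end
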